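(* Let $Y\subset\mathbb C^n$ be a $k$-dimensional subspace and $a\in(\mathbb C^\times)^n$. Assume that for every $j\in\{1,\dots,n\}$, $Y$ is not contained in the hyperplane $\{q_j=0\}$ and $Y^\perp$ is not contained in the hyperplane $\{p_j=0\}$. Then $L_{Y,a}$ is an irreducible smooth $n$-dimensional Lagrangian subvariety of $\mathbb C^n\times\{p\in(\mathbb C^n)^*:\prod_{j=1}^np_j\ne0\}$, defined by the equations $$F_\alpha:=\sum_{j=1}^n\alpha_jp_j=0\ \ (\alpha\in Y),\qquad G_{\beta,a}:=\sum_{j=1}^n\beta_j(q_j-a_j/p_j)=0\ \ (\beta\in Y^\perp),$$ and the set of all functions $\{F_\alpha,G_{\beta,a}\}$ is in involution.
   Context: $\mathbb C^n$ has coordinates $q_1,\dots,q_n$, the dual space $(\mathbb C^n)^*$ has dual coordinates $p_1,\dots,p_n$, and $\mathbb C^n\times(\mathbb C^n)^*$ carries the symplectic form $\sum_jdp_j\wedge dq_j$. Two functions $M,N$ are in involution if $\sum_j(\partial M/\partial q_j\,\partial N/\partial p_j-\partial M/\partial p_j\,\partial N/\partial q_j)=0$. $Y^\perp\subset(\mathbb C^n)^*$ is the annihilator of $Y$. The rational symplectic map $r_a(q_1,\dots,q_n,p_1,\dots,p_n)=(q_1+a_1/p_1,\dots,q_n+a_n/p_n,p_1,\dots,p_n)$ is defined where all $p_j\ne0$, and $L_{Y,a}=r_a(Y\times Y^\perp)$ is the image under $r_a$ of the points of $Y\times Y^\perp$ with all $p_j\ne0$. *)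

theory Defs
  imports "HOL-Analysis.Analysis"
begin

text \<open>Phase space: points (q,p) with q in C^n and p in (C^n)^*, the dual space being
identified with C^n via the pairing  p(q) = sum_j p_j q_j.  The dimension n is CARD('n).\<close>

type_synonym 'n phase = "(complex ^ 'n) \<times> (complex ^ 'n)"

definition annih :: "(complex ^ 'n::finite) set \<Rightarrow> (complex ^ 'n) set" where
  "annih Y = {p. \<forall>y\<in>Y. (\<Sum>j\<in>UNIV. p $ j * y $ j) = 0}"

definition torusU :: "'n::finite phase set" where
  "torusU = {x. \<forall>j. snd x $ j \<noteq> 0}"

definition r_map :: "complex ^ 'n::finite \<Rightarrow> 'n phase \<Rightarrow> 'n phase" where
  "r_map a x = ((\<chi> j. fst x $ j + a $ j / snd x $ j), snd x)"

definition L_Ya :: "(complex ^ 'n) set \<Rightarrow> complex ^ 'n \<Rightarrow> 'n::finite phase set" where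
  "L_Ya Y a = r_map a ` {x. fst x \<in> Y \<and> snd x \<in> annih Y \<and> (\<forall>j. snd x $ j \<noteq> 0)}"

definition F_fun :: "complex ^ 'n \<Rightarrow> 'n::finite phase \<Rightarrow> complex" where
  "F_fun \<alpha> x = (\<Sum>j\<in>UNIV. \<alpha> $ j * snd x $ j)"

definition G_fun :: "complex ^ 'n \<Rightarrow> complex ^ 'n \<Rightarrow> 'n::finite phase \<Rightarrow> complex" where
  "G_fun a \<beta> x = (\<Sum>j\<in>UNIV. \<beta> $ j * (fst x $ j - a $ j / snd x $ j))"

definition dq :: "('n::finite phase \<Rightarrow> complex) \<Rightarrow> 'n \<Rightarrow> 'n phase \<Rightarrow> complex" where
  "dq M j x = deriv (\<lambda>t. M ((\<chi> i. if i = j then t else fst x $ i), snd x)) (fst x $ j)"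

definition dp :: "('n::finite phase \<Rightarrow> complex) \<Rightarrow> 'n \<Rightarrow> 'n phase \<Rightarrow> complex" where
  "dp M j x = deriv (\<lambda>t. M (fst x, (\<chi> i. if i = j then t else snd x $ i))) (snd x $ j)"

definition poisson :: "('n::finite phase \<Rightarrow> complex) \<Rightarrow> ('n phase \<Rightarrow> complex) \<Rightarrow> 'n phase \<Rightarrow> complex" where
  "poisson M N x = (\<Sum>j\<in>UNIV. dq M j x * dp N j x - dp M j x * dq N j x)"

definition in_involution :: "('n::finite phase \<Rightarrow> complex) set \<Rightarrow> 'n phase set \<Rightarrow> bool" where
  "in_involution S U \<longleftrightarrow> (\<forall>M\<in>S. \<forall>N\<in>S. \<forall>x\<in>U. poisson M N x = 0)"

inductive_set polyfun :: "('n::finite phase \<Rightarrow> complex) set" where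
  const: "(\<lambda>x. c) \<in> polyfun"
| qcoord: "(\<lambda>x. fst x $ j) \<in> polyfun"
| pcoord: "(\<lambda>x. snd x $ j) \<in> polyfun"
| add: "f \<in> polyfun \<Longrightarrow> g \<in> polyfun \<Longrightarrow> (\<lambda>x. f x + g x) \<in> polyfun"
| mult: "f \<in> polyfun \<Longrightarrow> g \<in> polyfun \<Longrightarrow> (\<lambda>x. f x * g x) \<in> polyfun"

definition closed_in_U :: "'n::finite phase set \<Rightarrow> bool" where
  "closed_in_U V \<longleftrightarrow> (\<exists>S \<subseteq> polyfun. V = {x \<in> torusU. \<forall>f\<in>S. f x = 0})"

definition irreducible_in_U :: "'n::finite phase set \<Rightarrow> bool" where
  "irreducible_in_U V \<longleftrightarrow> closed_in_U V \<and> V \<noteq> {} \<and>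
     (\<forall>V1 V2. closed_in_U V1 \<and> closed_in_U V2 \<and> V = V1 \<union> V2 \<longrightarrow> V1 = V \<or> V2 = V)"

definition dirderiv :: "('n::finite phase \<Rightarrow> complex) \<Rightarrow> 'n phase \<Rightarrow> 'n phase \<Rightarrow> complex" where
  "dirderiv f x v = deriv (\<lambda>t::complex. f (fst x + t *s fst v, snd x + t *s snd v)) 0"

definition tangent_space :: "'n::finite phase set \<Rightarrow> 'n phase \<Rightarrow> 'n phase set" where
  "tangent_space V x = {v. \<forall>f\<in>polyfun. (\<forall>y\<in>V. f y = 0) \<longrightarrow> dirderiv f x v = 0}"

definition pscale :: "complex \<Rightarrow> 'n::finite phase \<Rightarrow> 'n phase" where
  "pscale c v = (c *s fst v, c *s snd v)"

definition pdim :: "'n::finite phase set \<Rightarrow> nat" where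
  "pdim T = vector_space.dim pscale T"

definition omega :: "'n::finite phase \<Rightarrow> 'n phase \<Rightarrow> complex" where
  "omega v w = (\<Sum>j\<in>UNIV. snd v $ j * fst w $ j - snd w $ j * fst v $ j)"

text \<open>V is an irreducible smooth n-dimensional Lagrangian subvariety of U:
 irreducible Zariski-closed in U, and at every point the Zariski tangent space has
 dimension n = CARD('n) (smoothness of dimension n) and is isotropic for omega.\<close>
definition smooth_lagrangian_subvariety :: "'n::finite phase set \<Rightarrow> bool" where
  "smooth_lagrangian_subvariety V \<longleftrightarrow> irreducible_in_U V \<and>
     (\<forall>x\<in>V. pdim (tangent_space V x) = CARD('n) \<and>
        (\<forall>v\<in>tangent_space V x. \<forall>w\<in>tangent_space V x. omega v w = 0))"

end

theory Submission
  imports Defs "HOL-Complex_Analysis.Conformal_Mappings"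
begin


definition pair :: "complex^'n::finite \<Rightarrow> complex^'n \<Rightarrow> complex" where
  "pair x y = (\<Sum>j\<in>UNIV. x $ j * y $ j)"

lemma annih_pair: "annih Y = {p. \<forall>y\<in>Y. pair p y = 0}"
  by (simp add: annih_def pair_def)

lemma pair_comm: "pair x y = pair y x"
  by (simp add: pair_def mult.commute)

lemma pair_add: "pair (x + y) z = pair x z + pair y z"
  by (simp add: pair_def algebra_simps sum.distrib)

lemma pair_scale: "pair (c *s x) z = c * pair x z"
  by (simp add: pair_def algebra_simps sum_distrib_left)

lemma pair_zero[simp]: "pair 0 z = 0" by (simp add: pair_def)

lemma pair_lin2: "Vector_Spaces.linear (*s) (*) (\<lambda>y. pair p y)"
  by unfold_locales (simp_all add: pair_comm[of p] pair_add pair_scale)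

lemma pair_span_zero:
  assumes "\<forall>c\<in>C. pair p c = 0" "y \<in> vec.span C"
  shows "pair p y = 0"
proof -
  have "vec.subspace {y. pair p y = 0}"
    by (auto simp: vec.subspace_def pair_comm[of p] pair_add pair_scale)
  thus ?thesis using vec.span_minimal[of C "{y. pair p y = 0}"] assms by auto
qed

lemma subspace_annih: "vec.subspace (annih Y)"
  by (auto simp: vec.subspace_def annih_pair pair_add pair_scale)

lemma pair_axis: "pair p (axis j 1) = p $ j"
  unfolding pair_def axis_def by (simp add: if_distrib cong: if_cong)



lemma dim_annih:
  fixes Y :: "(complex^'n::finite) set"
  assumes Ys: "vec.subspace Y"
  shows "vec.dim (annih Y) + vec.dim Y = CARD('n)"
proof -
  obtain C where C: "C \<subseteq> Y" "vec.independent C" "Y \<subseteq> vec.span C" "card C = vec.dim Y"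
    using vec.basis_exists[of Y] by blast
  obtain D where D: "C \<subseteq> D" "vec.independent D" "UNIV \<subseteq> vec.span D"
    using vec.maximal_independent_subset_extend[OF subset_UNIV C(2)] by metis
  have finD: "finite D" using D(2) vec.finiteI_independent by blast
  have cardD: "card D = CARD('n)"
  proof -
    have "card D = vec.dim (vec.span D)"
      using vec.indep_card_eq_dim_span[OF D(2)] by simp
    also have "vec.span D = UNIV" using D(3) by auto
    also have "vec.dim (UNIV :: (complex^'n) set) = CARD('n)" by (simp add: card_cart_basis)
    finally show ?thesis .
  qed
  obtain g where g: "bij_betw g (UNIV::'n set) D"
    using finite_same_card_bij[OF finite finD] cardD by (metis finite_UNIV card_UNIV_def)
  define \<Phi> where "\<Phi> p = (\<chi> i. pair p (g i))" for p :: "complex^'n"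
  have linP: "Vector_Spaces.linear (*s) (*s) \<Phi>"
    by unfold_locales (simp_all add: \<Phi>_def vec_eq_iff pair_add pair_scale)
  have injP: "inj \<Phi>"
  proof (rule vec.linear_inj_iff_eq_0[THEN iffD2, OF linP], intro allI impI)
    fix p assume p0: "\<Phi> p = 0"
    have "pair p d = 0" if dD: "d \<in> D" for d
    proof -
      obtain i where "d = g i" using g dD unfolding bij_betw_def by blast
      moreover have "\<Phi> p $ i = pair p (g i)" unfolding \<Phi>_def by simp
      ultimately show ?thesis using p0 by simp
    qed
    hence "pair p y = 0" for y using pair_span_zero[of D p y] D(3) by blast
    hence "p $ j = 0" for j using pair_axis[of p j] by simp
    thus "p = 0" by (simp add: vec_eq_iff)
  qed
  have surjP: "surj \<Phi>" using vec.linear_injective_imp_surjective[OF linP injP] by simp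
  obtain \<Psi> where Psi: "Vector_Spaces.linear (*s) (*s) \<Psi>" "\<forall>x. \<Psi> (\<Phi> x) = x" "\<forall>x. \<Phi> (\<Psi> x) = x"
    using vec.linear_injective_isomorphism[OF linP injP] by blast
  define I where "I = {i. g i \<notin> C}"
  define W0 where "W0 = {w::complex^'n. \<forall>i. i \<notin> I \<longrightarrow> w $ i = 0}"
  have annE: "annih Y = \<Psi> ` W0"
  proof -
    have "p \<in> annih Y \<longleftrightarrow> \<Phi> p \<in> W0" for p
    proof -
      have "p \<in> annih Y \<longleftrightarrow> (\<forall>c\<in>C. pair p c = 0)"
        using C(1,3) pair_span_zero[of C p] by (auto simp: annih_pair)
      also have "\<dots> \<longleftrightarrow> (\<forall>i. g i \<in> C \<longrightarrow> pair p (g i) = 0)"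
      proof -
        have "C \<subseteq> range g" using g D(1) by (auto simp: bij_betw_def)
        thus ?thesis by blast
      qed
      finally show ?thesis by (simp add: W0_def I_def \<Phi>_def)
    qed
    note eq = this
    show ?thesis
    proof
      show "annih Y \<subseteq> \<Psi> ` W0"
      proof
        fix x assume "x \<in> annih Y"
        hence "\<Phi> x \<in> W0" using eq by blast
        moreover have "x = \<Psi> (\<Phi> x)" using Psi by simp
        ultimately show "x \<in> \<Psi> ` W0" by blast
      qed
      show "\<Psi> ` W0 \<subseteq> annih Y" using eq Psi(3) by auto
    qed
  qed
  have "vec.dim (annih Y) = vec.dim W0"
    unfolding annE
    by (rule vec.dim_image_eq[OF Psi(1)]) (rule inj_on_subset[OF _ subset_UNIV], metis Psi(3) injI)
  also have "vec.dim W0 = card I"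
  proof -
    let ?B = "(\<lambda>i. axis i (1::complex)) ` I"
    have indB: "vec.independent ?B"
      by (rule vec.independent_mono[OF vec.independent_Basis]) (auto simp: cart_basis_def)
    have "W0 = vec.span ?B"
    proof
      show "W0 \<subseteq> vec.span ?B"
      proof
        fix w assume w: "w \<in> W0"
        have "w = (\<Sum>i\<in>UNIV. w $ i *s axis i 1)" by (simp add: basis_expansion)
        also have "\<dots> = (\<Sum>i\<in>I. w $ i *s axis i 1)"
          by (rule sum.mono_neutral_right) (use w in \<open>auto simp: W0_def\<close>)
        also have "\<dots> \<in> vec.span ?B"
          by (intro vec.span_sum vec.span_scale vec.span_base) auto
        finally show "w \<in> vec.span ?B" .
      qed
      show "vec.span ?B \<subseteq> W0"
        by (rule vec.span_minimal) (auto simp: vec.subspace_def W0_def axis_def)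
    qed
    hence "vec.dim W0 = card ?B" using vec.dim_span_eq_card_independent[OF indB] by simp
    also have "card ?B = card I"
      by (rule card_image) (auto simp: inj_on_def axis_eq_axis)
    finally show ?thesis .
  qed
  also have "card I + card C = CARD('n)"
  proof -
    have "g ` I = D - C" using g C D by (auto simp: I_def bij_betw_def)
    hence "card I = card (D - C)"
      using g by (metis bij_betw_def card_image inj_on_subset subset_UNIV)
    moreover have "finite C" using D(1) finD finite_subset by blast
    moreover have "card C \<le> card D" using D(1) finD card_mono by blast
    ultimately show ?thesis using D(1) cardD card_Diff_subset[of C D] by simp
  qed
  finally show ?thesis using C(4) by simp
qed

lemma annih_annih:
  fixes Y :: "(complex^'n::finite) set"
  assumes Ys: "vec.subspace Y"
  shows "annih (annih Y) = Y"
proof -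
  have sub: "Y \<subseteq> annih (annih Y)" by (auto simp: annih_pair pair_comm)
  have "vec.dim (annih (annih Y)) = vec.dim Y"
    using dim_annih[OF Ys] dim_annih[OF subspace_annih[of Y]] by simp
  thus ?thesis using vec.subspace_dim_equal[OF Ys subspace_annih sub] by simp
qed



lemma sum_single_if:
  fixes g :: "'n::finite \<Rightarrow> complex \<Rightarrow> complex"
  shows "(\<Sum>i\<in>UNIV. g i (if i = j then t else c i)) = g j t + (\<Sum>i\<in>UNIV-{j}. g i (c i))"
proof -
  have "(\<Sum>i\<in>UNIV. g i (if i = j then t else c i)) = g j t + (\<Sum>i\<in>UNIV-{j}. g i (if i = j then t else c i))"
    by (subst sum.remove[of UNIV j]) auto
  also have "(\<Sum>i\<in>UNIV-{j}. g i (if i = j then t else c i)) = (\<Sum>i\<in>UNIV-{j}. g i (c i))"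
    by (rule sum.cong) auto
  finally show ?thesis .
qed

lemma deriv_single:
  fixes g :: "'n::finite \<Rightarrow> complex \<Rightarrow> complex"
  assumes "(g j has_field_derivative D) (at z)"
  shows "deriv (\<lambda>t. \<Sum>i\<in>UNIV. g i (if i = j then t else c i)) z = D"
proof -
  have "((\<lambda>t. g j t + (\<Sum>i\<in>UNIV-{j}. g i (c i))) has_field_derivative D + 0) (at z)"
    by (intro derivative_intros assms)
  thus ?thesis by (simp add: sum_single_if DERIV_imp_deriv)
qed

lemma dq_F: "dq (F_fun \<alpha>) j x = 0"
  unfolding dq_def F_fun_def by simp

lemma dp_F: "dp (F_fun \<alpha>) j x = \<alpha> $ j"
proof -
  have "dp (F_fun \<alpha>) j x = deriv (\<lambda>t. \<Sum>i\<in>UNIV. (\<lambda>i s. \<alpha> $ i * s) i (if i = j then t else snd x $ i)) (snd x $ j)"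
    unfolding dp_def F_fun_def by (simp add: if_distrib cong: if_cong)
  also have "\<dots> = \<alpha> $ j"
    by (rule deriv_single) (auto intro!: derivative_eq_intros)
  finally show ?thesis .
qed

lemma dq_G: "dq (G_fun a \<beta>) j x = \<beta> $ j"
proof -
  have "dq (G_fun a \<beta>) j x = deriv (\<lambda>t. \<Sum>i\<in>UNIV. (\<lambda>i s. \<beta> $ i * (s - a $ i / snd x $ i)) i (if i = j then t else fst x $ i)) (fst x $ j)"
    unfolding dq_def G_fun_def by (simp add: if_distrib cong: if_cong)
  also have "\<dots> = \<beta> $ j"
    by (rule deriv_single) (auto intro!: derivative_eq_intros)
  finally show ?thesis .
qed

lemma dp_G: assumes "snd x $ j \<noteq> 0"
  shows "dp (G_fun a \<beta>) j x = \<beta> $ j * a $ j / (snd x $ j)^2"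
proof -
  have "dp (G_fun a \<beta>) j x = deriv (\<lambda>t. \<Sum>i\<in>UNIV. (\<lambda>i s. \<beta> $ i * (fst x $ i - a $ i / s)) i (if i = j then t else snd x $ i)) (snd x $ j)"
    unfolding dp_def G_fun_def by (simp add: if_distrib cong: if_cong)
  also have "\<dots> = \<beta> $ j * a $ j / (snd x $ j)^2"
    by (rule deriv_single) (use assms in \<open>auto intro!: derivative_eq_intros simp: power2_eq_square field_simps\<close>)
  finally show ?thesis .
qed

lemma involution:
  fixes Y :: "(complex ^ 'n::finite) set"
  shows "in_involution ({F_fun \<alpha> | \<alpha>. \<alpha> \<in> Y} \<union> {G_fun a \<beta> | \<beta>. \<beta> \<in> annih Y}) torusU"
  unfolding in_involution_def
proof (intro ballI)
  fix M N x assume M: "M \<in> {F_fun \<alpha> | \<alpha>. \<alpha> \<in> Y} \<union> {G_fun a \<beta> | \<beta>. \<beta> \<in> annih Y}"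
    and N: "N \<in> {F_fun \<alpha> | \<alpha>. \<alpha> \<in> Y} \<union> {G_fun a \<beta> | \<beta>. \<beta> \<in> annih Y}" and x: "(x::'n phase) \<in> torusU"
  have nz: "snd x $ j \<noteq> 0" for j using x by (simp add: torusU_def)
  have FG: "(\<Sum>j\<in>UNIV. \<alpha> $ j * \<beta> $ j) = 0" if "\<alpha> \<in> Y" "\<beta> \<in> annih Y" for \<alpha> \<beta>
    using that by (auto simp: annih_def mult.commute)
  show "poisson M N x = 0"
    using M N
  proof (elim UnE CollectE exE conjE)
    fix \<alpha> \<alpha>' assume "M = F_fun \<alpha>" "N = F_fun \<alpha>'"
    thus ?thesis by (simp add: poisson_def dq_F dp_F)
  next
    fix \<alpha> \<beta> assume "M = F_fun \<alpha>" "N = G_fun a \<beta>" "\<alpha> \<in> Y" "\<beta> \<in> annih Y"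
    thus ?thesis using FG by (simp add: poisson_def dq_F dp_F dq_G sum_negf)
  next
    fix \<alpha> \<beta> assume "N = F_fun \<alpha>" "M = G_fun a \<beta>" "\<alpha> \<in> Y" "\<beta> \<in> annih Y"
    thus ?thesis using FG[of \<alpha> \<beta>] by (simp add: poisson_def dq_F dp_F dq_G mult.commute)
  next
    fix \<beta> \<beta>' assume "M = G_fun a \<beta>" "N = G_fun a \<beta>'"
    thus ?thesis by (simp add: poisson_def dq_G dp_G nz)
  qed
qed



lemma L_eq:
  fixes Y :: "(complex ^ 'n::finite) set"
  assumes Ys: "vec.subspace Y"
  shows "L_Ya Y a = {x \<in> torusU. (\<forall>\<alpha>\<in>Y. F_fun \<alpha> x = 0) \<and> (\<forall>\<beta>\<in>annih Y. G_fun a \<beta> x = 0)}"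
proof
  show "L_Ya Y a \<subseteq> {x \<in> torusU. (\<forall>\<alpha>\<in>Y. F_fun \<alpha> x = 0) \<and> (\<forall>\<beta>\<in>annih Y. G_fun a \<beta> x = 0)}"
  proof
    fix x assume "x \<in> L_Ya Y a"
    then obtain y where y0: "x = r_map a y" "y \<in> {x. fst x \<in> Y \<and> snd x \<in> annih Y \<and> (\<forall>j. snd x $ j \<noteq> 0)}"
      unfolding L_Ya_def by (rule imageE)
    hence y: "fst y \<in> Y" "snd y \<in> annih Y" "\<forall>j. snd y $ j \<noteq> 0" by auto
    have sx: "snd x = snd y" using y0 by (simp add: r_map_def)
    have fx: "fst x $ j - a $ j / snd x $ j = fst y $ j" for j using y0 by (simp add: r_map_def)
    have "F_fun \<alpha> x = 0" if "\<alpha> \<in> Y" for \<alpha>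
    proof -
      have "(\<Sum>j\<in>UNIV. snd y $ j * \<alpha> $ j) = 0" using y(2) that unfolding annih_def by blast
      thus ?thesis unfolding F_fun_def sx by (simp add: mult.commute)
    qed
    moreover have "G_fun a \<beta> x = 0" if "\<beta> \<in> annih Y" for \<beta>
    proof -
      have "(\<Sum>j\<in>UNIV. \<beta> $ j * fst y $ j) = 0" using y(1) that unfolding annih_def by blast
      thus ?thesis unfolding G_fun_def fx .
    qed
    moreover have "x \<in> torusU" using y(3) sx by (simp add: torusU_def)
    ultimately show "x \<in> {x \<in> torusU. (\<forall>\<alpha>\<in>Y. F_fun \<alpha> x = 0) \<and> (\<forall>\<beta>\<in>annih Y. G_fun a \<beta> x = 0)}"
      by blast
  qed
  show "{x \<in> torusU. (\<forall>\<alpha>\<in>Y. F_fun \<alpha> x = 0) \<and> (\<forall>\<beta>\<in>annih Y. G_fun a \<beta> x = 0)} \<subseteq> L_Ya Y a"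
  proof
    fix x assume x: "x \<in> {x \<in> torusU. (\<forall>\<alpha>\<in>Y. F_fun \<alpha> x = 0) \<and> (\<forall>\<beta>\<in>annih Y. G_fun a \<beta> x = 0)}"
    define y where "y = ((\<chi> j. fst x $ j - a $ j / snd x $ j), snd x)"
    have nz: "\<forall>j. snd x $ j \<noteq> 0" using x by (simp add: torusU_def)
    have "fst y \<in> annih (annih Y)"
      unfolding annih_def[of "annih Y"]
    proof (intro CollectI ballI)
      fix \<beta> assume "\<beta> \<in> annih Y"
      hence "G_fun a \<beta> x = 0" using x by blast
      thus "(\<Sum>j\<in>UNIV. fst y $ j * \<beta> $ j) = 0" by (simp add: y_def G_fun_def mult.commute)
    qed
    hence "fst y \<in> Y" using annih_annih[OF Ys] by simp
    moreover have "snd y \<in> annih Y"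
      unfolding annih_def
    proof (intro CollectI ballI)
      fix \<alpha> assume "\<alpha> \<in> Y"
      hence "F_fun \<alpha> x = 0" using x by blast
      thus "(\<Sum>j\<in>UNIV. snd y $ j * \<alpha> $ j) = 0" by (simp add: y_def F_fun_def mult.commute)
    qed
    moreover have "x = r_map a y" using nz by (simp add: r_map_def y_def vec_eq_iff)
    moreover have "\<forall>j. snd y $ j \<noteq> 0" using nz by (simp add: y_def)
    ultimately show "x \<in> L_Ya Y a" unfolding L_Ya_def by blast
  qed
qed

lemma polyfun_sum: "finite A \<Longrightarrow> (\<And>i. i \<in> A \<Longrightarrow> f i \<in> polyfun) \<Longrightarrow> (\<lambda>x. \<Sum>i\<in>A. f i x) \<in> polyfun"
proof (induction A rule: finite_induct)
  case empty thus ?case using polyfun.const[of 0] by simp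
next
  case (insert i A) thus ?case using polyfun.add[of "f i" "\<lambda>x. \<Sum>i\<in>A. f i x"] by simp
qed

lemma polyfun_prod: "finite A \<Longrightarrow> (\<And>i. i \<in> A \<Longrightarrow> f i \<in> polyfun) \<Longrightarrow> (\<lambda>x. \<Prod>i\<in>A. f i x) \<in> polyfun"
proof (induction A rule: finite_induct)
  case empty thus ?case using polyfun.const[of 1] by simp
next
  case (insert i A) thus ?case using polyfun.mult[of "f i" "\<lambda>x. \<Prod>i\<in>A. f i x"] by simp
qed

definition H_fun :: "complex ^ 'n \<Rightarrow> complex ^ 'n \<Rightarrow> 'n::finite phase \<Rightarrow> complex" where
  "H_fun a \<beta> x = (\<Sum>j\<in>UNIV. \<beta> $ j * fst x $ j) * (\<Prod>i\<in>UNIV. snd x $ i)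
     - (\<Sum>j\<in>UNIV. \<beta> $ j * a $ j * (\<Prod>i\<in>UNIV-{j}. snd x $ i))"

lemma mult_const_poly: "f \<in> polyfun \<Longrightarrow> (\<lambda>x. c * f x) \<in> polyfun"
  using polyfun.mult[OF polyfun.const] by blast

lemma F_poly: "F_fun \<alpha> \<in> polyfun"
proof -
  have "(\<lambda>x. \<Sum>j\<in>UNIV. (\<lambda>j x. \<alpha> $ j * snd x $ j) j x) \<in> polyfun"
    by (rule polyfun_sum) (auto intro: mult_const_poly polyfun.pcoord)
  thus ?thesis unfolding F_fun_def by simp
qed

lemma H_poly: "H_fun a \<beta> \<in> polyfun"
proof -
  have P: "(\<lambda>x. \<Prod>i\<in>A. (\<lambda>i x. snd x $ i) i x) \<in> polyfun" for A :: "'a set"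
    by (rule polyfun_prod) (auto intro: polyfun.pcoord)
  have S1: "(\<lambda>x. \<Sum>j\<in>UNIV. (\<lambda>j x. \<beta> $ j * fst x $ j) j x) \<in> polyfun"
    by (rule polyfun_sum) (auto intro: mult_const_poly polyfun.qcoord)
  have S2: "(\<lambda>x. \<Sum>j\<in>UNIV. (\<lambda>j x. (\<beta> $ j * a $ j) * (\<Prod>i\<in>UNIV-{j}. snd x $ i)) j x) \<in> polyfun"
    by (rule polyfun_sum) (use P in \<open>auto intro: mult_const_poly\<close>)
  have "(\<lambda>x. (\<Sum>j\<in>UNIV. \<beta> $ j * fst x $ j) * (\<Prod>i\<in>UNIV. snd x $ i) +
      (-1) * (\<Sum>j\<in>UNIV. (\<beta> $ j * a $ j) * (\<Prod>i\<in>UNIV-{j}. snd x $ i))) \<in> polyfun"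
    using polyfun.add[OF polyfun.mult[OF S1 P[of UNIV]] mult_const_poly[OF S2, of "-1"]] by simp
  thus ?thesis unfolding H_fun_def by (simp add: mult.assoc)
qed

lemma H_G: fixes x :: "'n::finite phase" assumes "x \<in> torusU"
  shows "H_fun a \<beta> x = G_fun a \<beta> x * (\<Prod>i\<in>UNIV. snd x $ i)"
proof -
  have nz: "snd x $ j \<noteq> 0" for j using assms by (simp add: torusU_def)
  have pr: "(\<Prod>i\<in>UNIV. snd x $ i) = snd x $ j * (\<Prod>i\<in>UNIV-{j}. snd x $ i)" for j
    by (simp add: prod.remove)
  have "G_fun a \<beta> x * (\<Prod>i\<in>UNIV. snd x $ i) =
     (\<Sum>j\<in>UNIV. \<beta> $ j * fst x $ j * (\<Prod>i\<in>UNIV. snd x $ i) - \<beta> $ j * a $ j * ((\<Prod>i\<in>UNIV. snd x $ i) / snd x $ j))"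
    unfolding G_fun_def sum_distrib_right by (rule sum.cong) (auto simp: algebra_simps)
  also have "\<dots> = (\<Sum>j\<in>UNIV. \<beta> $ j * fst x $ j * (\<Prod>i\<in>UNIV. snd x $ i) - \<beta> $ j * a $ j * (\<Prod>i\<in>UNIV-{j}. snd x $ i))"
  proof (rule sum.cong)
    fix j :: 'n
    have "(\<Prod>i\<in>UNIV. snd x $ i) / snd x $ j = (\<Prod>i\<in>UNIV-{j}. snd x $ i)"
      using pr[of j] nz[of j] by simp
    thus "\<beta> $ j * fst x $ j * (\<Prod>i\<in>UNIV. snd x $ i) - \<beta> $ j * a $ j * ((\<Prod>i\<in>UNIV. snd x $ i) / snd x $ j)
        = \<beta> $ j * fst x $ j * (\<Prod>i\<in>UNIV. snd x $ i) - \<beta> $ j * a $ j * (\<Prod>i\<in>UNIV-{j}. snd x $ i)"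
      by simp
  qed simp
  also have "\<dots> = H_fun a \<beta> x"
    unfolding H_fun_def sum_subtractf sum_distrib_right ..
  finally show ?thesis by simp
qed

lemma prod_nz: "x \<in> torusU \<Longrightarrow> (\<Prod>i\<in>UNIV. snd x $ i) \<noteq> 0"
  by (simp add: torusU_def)

lemma HG_iff: fixes x :: "'n::finite phase" shows "x \<in> torusU \<Longrightarrow> H_fun a \<beta> x = 0 \<longleftrightarrow> G_fun a \<beta> x = 0"
  using H_G[of x a \<beta>] prod_nz[of x] by simp

lemma closed_L:
  fixes Y :: "(complex ^ 'n::finite) set"
  assumes Ys: "vec.subspace Y"
  shows "closed_in_U (L_Ya Y a)"
  unfolding closed_in_U_def
proof (intro exI conjI)
  let ?S = "{F_fun \<alpha> | \<alpha>. \<alpha> \<in> Y} \<union> {H_fun a \<beta> | \<beta>. \<beta> \<in> annih Y}"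
  show "?S \<subseteq> polyfun" using F_poly H_poly by auto
  show "L_Ya Y a = {x \<in> torusU. \<forall>f\<in>?S. f x = 0}"
    unfolding L_eq[OF Ys]
  proof (intro Collect_cong conj_cong refl)
    fix x :: "'n phase" assume x: "x \<in> torusU"
    show "((\<forall>\<alpha>\<in>Y. F_fun \<alpha> x = 0) \<and> (\<forall>\<beta>\<in>annih Y. G_fun a \<beta> x = 0)) = (\<forall>f\<in>?S. f x = 0)"
      using HG_iff[OF x] by blast
  qed
qed


lemma annih_torus:
  fixes Y :: "(complex ^ 'n::finite) set"
  assumes "\<forall>j. \<not> annih Y \<subseteq> {p. p $ j = 0}"
  shows "\<exists>p\<in>annih Y. \<forall>j. p $ j \<noteq> 0"
proof -
  have "\<exists>p\<in>annih Y. \<forall>j\<in>J. p $ j \<noteq> 0" if "finite J" for J :: "'n set"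
    using that
  proof (induction J rule: finite_induct)
    case empty thus ?case using subspace_annih vec.subspace_0 by blast
  next
    case (insert k J)
    then obtain p where p: "p \<in> annih Y" "\<forall>j\<in>J. p $ j \<noteq> 0" by blast
    obtain b where b: "b \<in> annih Y" "b $ k \<noteq> 0" using assms by blast
    let ?bad = "(\<lambda>j. - p $ j / b $ j) ` insert k J"
    have "finite ?bad" using insert by simp
    then obtain c where c: "c \<notin> ?bad" using ex_new_if_finite[OF infinite_UNIV_char_0] by blast
    have "p + c *s b \<in> annih Y"
      using p b subspace_annih[of Y] by (simp add: vec.subspace_add vec.subspace_scale)
    moreover have "(p + c *s b) $ j \<noteq> 0" if "j \<in> insert k J" for j
    proof
      assume h: "(p + c *s b) $ j = 0"
      show False
      proof (cases "b $ j = 0")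
        case True
        hence "j \<in> J" using that b by auto
        thus False using h True p by simp
      next
        case False
        hence "c = - p $ j / b $ j" using h by (simp add: field_simps add_eq_0_iff)
        thus False using c that by blast
      qed
    qed
    ultimately show ?case by blast
  qed
  from this[of UNIV] show ?thesis by simp
qed



definition curve_ok :: "'n::finite phase \<Rightarrow> 'n phase \<Rightarrow> ('n \<Rightarrow> complex \<Rightarrow> complex) \<Rightarrow> ('n \<Rightarrow> complex \<Rightarrow> complex) \<Rightarrow> complex \<Rightarrow> bool" where
  "curve_ok x v Q P t0 \<longleftrightarrow> (\<forall>j. (Q j has_field_derivative fst v $ j) (at t0)) \<and> (\<forall>j. (P j has_field_derivative snd v $ j) (at t0))
     \<and> (\<forall>j. Q j t0 = fst x $ j) \<and> (\<forall>j. P j t0 = snd x $ j)"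

lemma curve_at: "curve_ok x v Q P t0 \<Longrightarrow> ((\<chi> j. Q j t0), (\<chi> j. P j t0)) = x"
  by (simp add: curve_ok_def vec_eq_iff prod_eq_iff)

lemma poly_chain:
  fixes f :: "'n::finite phase \<Rightarrow> complex"
  assumes "f \<in> polyfun"
  shows "\<exists>d. \<forall>Q P t0. curve_ok x v Q P t0 \<longrightarrow> ((\<lambda>t. f ((\<chi> j. Q j t), (\<chi> j. P j t))) has_field_derivative d) (at t0)"
  using assms
proof induction
  case (const c) thus ?case by (auto intro: derivative_intros)
next
  case (qcoord j)
  show ?case by (rule exI[of _ "fst v $ j"]) (simp add: curve_ok_def)
next
  case (pcoord j)
  show ?case by (rule exI[of _ "snd v $ j"]) (simp add: curve_ok_def)
next
  case (add f g)
  then obtain d1 d2 where d1: "\<forall>Q P t0. curve_ok x v Q P t0 \<longrightarrow> ((\<lambda>t. f ((\<chi> j. Q j t), (\<chi> j. P j t))) has_field_derivative d1) (at t0)"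
    and d2: "\<forall>Q P t0. curve_ok x v Q P t0 \<longrightarrow> ((\<lambda>t. g ((\<chi> j. Q j t), (\<chi> j. P j t))) has_field_derivative d2) (at t0)"
    by blast
  show ?case by (rule exI[of _ "d1 + d2"]) (use d1 d2 in \<open>auto intro: derivative_intros\<close>)
next
  case (mult f g)
  then obtain d1 d2 where d1: "\<forall>Q P t0. curve_ok x v Q P t0 \<longrightarrow> ((\<lambda>t. f ((\<chi> j. Q j t), (\<chi> j. P j t))) has_field_derivative d1) (at t0)"
    and d2: "\<forall>Q P t0. curve_ok x v Q P t0 \<longrightarrow> ((\<lambda>t. g ((\<chi> j. Q j t), (\<chi> j. P j t))) has_field_derivative d2) (at t0)"
    by blast
  show ?case
  proof (rule exI[of _ "d1 * g x + d2 * f x"], intro allI impI)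
    fix Q P t0 assume c: "curve_ok x v Q P t0"
    have "((\<lambda>t. f ((\<chi> j. Q j t), (\<chi> j. P j t)) * g ((\<chi> j. Q j t), (\<chi> j. P j t))) has_field_derivative
       d1 * g ((\<chi> j. Q j t0), (\<chi> j. P j t0)) + d2 * f ((\<chi> j. Q j t0), (\<chi> j. P j t0))) (at t0)"
      using d1 d2 c by (auto intro!: DERIV_mult)
    thus "((\<lambda>t. f ((\<chi> j. Q j t), (\<chi> j. P j t)) * g ((\<chi> j. Q j t), (\<chi> j. P j t))) has_field_derivative
       d1 * g x + d2 * f x) (at t0)" by (simp add: curve_at[OF c])
  qed
qed

lemma dirderiv_chain:
  fixes f :: "'n::finite phase \<Rightarrow> complex"
  assumes "f \<in> polyfun"
    and d: "\<forall>Q P t0. curve_ok x v Q P t0 \<longrightarrow> ((\<lambda>t. f ((\<chi> j. Q j t), (\<chi> j. P j t))) has_field_derivative d) (at t0)"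
  shows "dirderiv f x v = d"
proof -
  let ?Q = "\<lambda>j t. fst x $ j + t * fst v $ j" and ?P = "\<lambda>j t. snd x $ j + t * snd v $ j"
  have "curve_ok x v ?Q ?P 0"
    by (auto simp: curve_ok_def intro!: derivative_eq_intros)
  hence D: "((\<lambda>t. f ((\<chi> j. ?Q j t), (\<chi> j. ?P j t))) has_field_derivative d) (at 0)" using d by blast
  have "(\<lambda>t::complex. f (fst x + t *s fst v, snd x + t *s snd v)) = (\<lambda>t. f ((\<chi> j. ?Q j t), (\<chi> j. ?P j t)))"
  proof -
    have "fst x + t *s fst v = (\<chi> j. ?Q j t)" "snd x + t *s snd v = (\<chi> j. ?P j t)" for t
      by (simp_all add: vec_eq_iff)
    thus ?thesis by simp
  qed
  thus ?thesis using D unfolding dirderiv_def by (simp add: DERIV_imp_deriv)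
qed



lemma open_nz: "open {t::complex. \<forall>j::'n::finite. c j + t * e j \<noteq> 0}"
proof -
  have "{t::complex. \<forall>j::'n. c j + t * e j \<noteq> 0} = (\<Inter>j. {t. c j + t * e j \<noteq> 0})" by auto
  moreover have "open {t::complex. c j + t * e j \<noteq> 0}" for j
    by (rule open_Collect_neq) (auto intro!: continuous_intros)
  ultimately show ?thesis by (auto intro!: open_INT)
qed

lemma dirderiv_F: "dirderiv (F_fun \<alpha>) x v = (\<Sum>j\<in>UNIV. \<alpha> $ j * snd v $ j)"
proof -
  have "((\<lambda>t. F_fun \<alpha> (fst x + t *s fst v, snd x + t *s snd v)) has_field_derivative (\<Sum>j\<in>UNIV. \<alpha> $ j * snd v $ j)) (at 0)"
    unfolding F_fun_def by (auto intro!: derivative_eq_intros simp: mult.commute)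
  thus ?thesis unfolding dirderiv_def by (rule DERIV_imp_deriv)
qed

lemma dirderiv_H:
  fixes x :: "'n::finite phase"
  assumes x: "x \<in> torusU" and G0: "G_fun a \<beta> x = 0"
  shows "dirderiv (H_fun a \<beta>) x v = (\<Prod>i\<in>UNIV. snd x $ i) * (\<Sum>j\<in>UNIV. \<beta> $ j * (fst v $ j + a $ j * snd v $ j / (snd x $ j)^2))"
proof -
  have nz: "snd x $ j \<noteq> 0" for j using x by (simp add: torusU_def)
  let ?g = "\<lambda>t. G_fun a \<beta> (fst x + t *s fst v, snd x + t *s snd v)"
  let ?P = "\<lambda>t. \<Prod>i\<in>UNIV. snd x $ i + t * snd v $ i"
  let ?G' = "\<Sum>j\<in>UNIV. \<beta> $ j * (fst v $ j + a $ j * snd v $ j / (snd x $ j)^2)"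
  have g: "(?g has_field_derivative ?G') (at 0)"
    unfolding G_fun_def
    by (auto intro!: derivative_eq_intros sum.cong simp: nz power2_eq_square field_simps)
  have "(?P has_field_derivative (\<Sum>i\<in>UNIV. snd v $ i * (\<Prod>y\<in>UNIV-{i}. snd x $ y + 0 * snd v $ y))) (at 0)"
    by (rule has_field_derivative_prod) (auto intro!: derivative_eq_intros)
  then obtain P' where P: "(?P has_field_derivative P') (at 0)" by blast
  have g0: "?g 0 = 0" using G0 by simp
  have "((\<lambda>t. ?g t * ?P t) has_field_derivative ?G' * ?P 0 + P' * ?g 0) (at 0)"
    by (rule DERIV_mult[OF g P])
  hence D: "((\<lambda>t. ?g t * ?P t) has_field_derivative ?G' * (\<Prod>i\<in>UNIV. snd x $ i)) (at 0)"
    by (simp add: G0)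
  let ?S = "{t::complex. \<forall>j::'n. snd x $ j + t * snd v $ j \<noteq> 0}"
  have "((\<lambda>t. H_fun a \<beta> (fst x + t *s fst v, snd x + t *s snd v)) has_field_derivative ?G' * (\<Prod>i\<in>UNIV. snd x $ i)) (at 0)"
  proof (rule has_field_derivative_transform_within_open[OF D open_nz])
    show "0 \<in> ?S" using nz by simp
    fix t assume t: "t \<in> ?S"
    hence "(fst x + t *s fst v, snd x + t *s snd v) \<in> torusU" by (simp add: torusU_def)
    thus "?g t * ?P t = H_fun a \<beta> (fst x + t *s fst v, snd x + t *s snd v)"
      by (simp add: H_G)
  qed
  thus ?thesis unfolding dirderiv_def by (simp add: DERIV_imp_deriv mult.commute)
qed



definition T0 :: "(complex ^ 'n) set \<Rightarrow> complex ^ 'n \<Rightarrow> 'n::finite phase \<Rightarrow> 'n phase set" where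
  "T0 Y a x = {v. snd v \<in> annih Y \<and> (\<chi> j. fst v $ j + a $ j * snd v $ j / (snd x $ j)^2) \<in> Y}"

lemma tangent_sub:
  fixes Y :: "(complex ^ 'n::finite) set"
  assumes Ys: "vec.subspace Y" and xV: "x \<in> L_Ya Y a"
  shows "tangent_space (L_Ya Y a) x \<subseteq> T0 Y a x"
proof
  fix v assume v: "v \<in> tangent_space (L_Ya Y a) x"
  have xV': "x \<in> torusU" "\<forall>\<alpha>\<in>Y. F_fun \<alpha> x = 0" "\<forall>\<beta>\<in>annih Y. G_fun a \<beta> x = 0"
    using xV unfolding L_eq[OF Ys] by auto
  have nz: "snd x $ j \<noteq> 0" for j using xV'(1) by (simp add: torusU_def)
  have "snd v \<in> annih Y"
    unfolding annih_def
  proof (intro CollectI ballI)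
    fix \<alpha> assume \<alpha>: "\<alpha> \<in> Y"
    have "\<forall>y\<in>L_Ya Y a. F_fun \<alpha> y = 0" using \<alpha> unfolding L_eq[OF Ys] by auto
    hence "dirderiv (F_fun \<alpha>) x v = 0" using v F_poly unfolding tangent_space_def by blast
    thus "(\<Sum>j\<in>UNIV. snd v $ j * \<alpha> $ j) = 0" by (simp add: dirderiv_F mult.commute)
  qed
  moreover have "(\<chi> j. fst v $ j + a $ j * snd v $ j / (snd x $ j)^2) \<in> annih (annih Y)"
    unfolding annih_def[of "annih Y"]
  proof (intro CollectI ballI)
    fix \<beta> assume \<beta>: "\<beta> \<in> annih Y"
    have "\<forall>y\<in>L_Ya Y a. H_fun a \<beta> y = 0"
    proof
      fix y assume "y \<in> L_Ya Y a"
      hence "y \<in> torusU" "G_fun a \<beta> y = 0" using \<beta> unfolding L_eq[OF Ys] by auto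
      thus "H_fun a \<beta> y = 0" using HG_iff by blast
    qed
    hence "dirderiv (H_fun a \<beta>) x v = 0" using v H_poly unfolding tangent_space_def by blast
    hence "(\<Prod>i\<in>UNIV. snd x $ i) * (\<Sum>j\<in>UNIV. \<beta> $ j * (fst v $ j + a $ j * snd v $ j / (snd x $ j)^2)) = 0"
      using dirderiv_H[OF xV'(1)] xV'(3) \<beta> by simp
    hence "(\<Sum>j\<in>UNIV. \<beta> $ j * (fst v $ j + a $ j * snd v $ j / (snd x $ j)^2)) = 0"
      using prod_nz[OF xV'(1)] by simp
    thus "(\<Sum>j\<in>UNIV. (\<chi> j. fst v $ j + a $ j * snd v $ j / (snd x $ j)^2) $ j * \<beta> $ j) = 0"
      by (simp add: mult.commute)
  qed
  ultimately show "v \<in> T0 Y a x" using annih_annih[OF Ys] by (simp add: T0_def)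
qed

lemma T0_sub_tangent:
  fixes Y :: "(complex ^ 'n::finite) set"
  assumes Ys: "vec.subspace Y" and xV: "x \<in> L_Ya Y a"
  shows "T0 Y a x \<subseteq> tangent_space (L_Ya Y a) x"
proof
  fix v assume v: "v \<in> T0 Y a x"
  obtain y where y0: "x = r_map a y" "y \<in> {x. fst x \<in> Y \<and> snd x \<in> annih Y \<and> (\<forall>j. snd x $ j \<noteq> 0)}"
    using xV unfolding L_Ya_def by (rule imageE)
  hence y: "fst y \<in> Y" "snd y \<in> annih Y" "\<forall>j. snd y $ j \<noteq> 0" by auto
  have sx: "snd x = snd y" using y0 by (simp add: r_map_def)
  have fx: "fst x $ j = fst y $ j + a $ j / snd y $ j" for j using y0 by (simp add: r_map_def)
  define u where "u = snd v"
  define w where "w = (\<chi> j. fst v $ j + a $ j * snd v $ j / (snd x $ j)^2)"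
  have u: "u \<in> annih Y" and w: "w \<in> Y" using v by (auto simp: T0_def u_def w_def)
  define Q where "Q j t = fst y $ j + t * w $ j + a $ j / (snd y $ j + t * u $ j)" for j t
  define P where "P j t = snd y $ j + t * u $ j" for j t
  let ?S = "{t::complex. \<forall>j::'n. snd y $ j + t * u $ j \<noteq> 0}"
  have c: "curve_ok x v Q P 0"
    unfolding curve_ok_def
  proof (intro conjI allI)
    fix j
    have "(Q j has_field_derivative (w $ j - a $ j * u $ j / (snd y $ j)^2)) (at 0)"
      unfolding Q_def using y(3)
      by (auto intro!: derivative_eq_intros simp: power2_eq_square field_simps)
    moreover have "w $ j - a $ j * u $ j / (snd y $ j)^2 = fst v $ j"
      by (simp add: w_def u_def sx)
    ultimately show "(Q j has_field_derivative fst v $ j) (at 0)" by simp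
    show "(P j has_field_derivative snd v $ j) (at 0)"
      unfolding P_def u_def by (auto intro!: derivative_eq_intros)
    show "Q j 0 = fst x $ j" by (simp add: Q_def fx)
    show "P j 0 = snd x $ j" by (simp add: P_def sx)
  qed
  show "v \<in> tangent_space (L_Ya Y a) x"
    unfolding tangent_space_def
  proof (intro CollectI ballI impI)
    fix f :: "'n phase \<Rightarrow> complex" assume f: "f \<in> polyfun" and fV: "\<forall>z\<in>L_Ya Y a. f z = 0"
    obtain d where d: "\<forall>Q P t0. curve_ok x v Q P t0 \<longrightarrow> ((\<lambda>t. f ((\<chi> j. Q j t), (\<chi> j. P j t))) has_field_derivative d) (at t0)"
      using poly_chain[OF f, of x v] by blast
    have D: "((\<lambda>t. f ((\<chi> j. Q j t), (\<chi> j. P j t))) has_field_derivative d) (at 0)"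
      using d c by blast
    have "((\<lambda>t. 0) has_field_derivative d) (at 0)"
    proof (rule has_field_derivative_transform_within_open[OF D open_nz])
      show "0 \<in> ?S" using y(3) by simp
      fix t assume t: "t \<in> ?S"
      have "((\<chi> j. Q j t), (\<chi> j. P j t)) = r_map a (fst y + t *s w, snd y + t *s u)"
        by (simp add: r_map_def Q_def P_def vec_eq_iff)
      moreover have "fst y + t *s w \<in> Y" using Ys y(1) w by (simp add: vec.subspace_add vec.subspace_scale)
      moreover have "snd y + t *s u \<in> annih Y" using subspace_annih[of Y] y(2) u
        by (simp add: vec.subspace_add vec.subspace_scale)
      moreover have "\<forall>j. (snd y + t *s u) $ j \<noteq> 0" using t by simp
      ultimately have "((\<chi> j. Q j t), (\<chi> j. P j t)) \<in> L_Ya Y a" unfolding L_Ya_def by auto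
      thus "f ((\<chi> j. Q j t), (\<chi> j. P j t)) = 0" using fV by blast
    qed
    hence "d = 0" using DERIV_const DERIV_unique by blast
    thus "dirderiv f x v = 0" using dirderiv_chain[OF f d] by simp
  qed
qed



interpretation ph: finite_dimensional_vector_space_prod
  "(*s) :: complex \<Rightarrow> complex^'n::finite \<Rightarrow> complex^'n"
  "(*s) :: complex \<Rightarrow> complex^'n::finite \<Rightarrow> complex^'n"
  "cart_basis :: (complex^'n) set" "cart_basis :: (complex^'n) set" ..

lemma ph_scale: "ph.scale = pscale"
  by (auto simp: ph.scale_def pscale_def fun_eq_iff)

lemma pdim_ph: "pdim T = ph.p.dim T"
  by (simp add: pdim_def ph_scale)

lemma dim_T0:
  fixes Y :: "(complex ^ 'n::finite) set"
  assumes Ys: "vec.subspace Y" and nz: "\<forall>j. snd x $ j \<noteq> 0"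
  shows "pdim (T0 Y a x) = CARD('n)"
proof -
  interpret pp: finite_dimensional_vector_space_pair_1 ph.scale ph.Basis_pair ph.scale ..
  define h where "h u = (\<chi> j. a $ j * u $ j / (snd x $ j)^2)" for u :: "complex^'n"
  define \<psi> where "\<psi> z = (fst z - h (snd z), snd z)" for z :: "'n phase"
  have lin: "Vector_Spaces.linear ph.scale ph.scale \<psi>"
    by unfold_locales (auto simp: \<psi>_def h_def ph.scale_def vec_eq_iff algebra_simps add_divide_distrib)
  have inj: "inj \<psi>" by (auto simp: inj_def \<psi>_def)
  have img: "T0 Y a x = \<psi> ` (Y \<times> annih Y)"
  proof
    show "T0 Y a x \<subseteq> \<psi> ` (Y \<times> annih Y)"
    proof
      fix v assume v: "v \<in> T0 Y a x"
      have "v = \<psi> (fst v + h (snd v), snd v)" by (simp add: \<psi>_def)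
      moreover have "fst v + h (snd v) \<in> Y" "snd v \<in> annih Y" using v
        by (auto simp: T0_def h_def plus_vec_def)
      ultimately show "v \<in> \<psi> ` (Y \<times> annih Y)" by blast
    qed
    show "\<psi> ` (Y \<times> annih Y) \<subseteq> T0 Y a x"
      by (auto simp: T0_def \<psi>_def h_def)
  qed
  have "pdim (T0 Y a x) = ph.p.dim (Y \<times> annih Y)"
    unfolding pdim_ph img
    by (rule pp.dim_image_eq[OF lin]) (use inj in \<open>auto simp: inj_on_def\<close>)
  also have "\<dots> = vec.dim Y + vec.dim (annih Y)"
    by (rule ph.dim_Times[OF Ys subspace_annih])
  also have "\<dots> = CARD('n)" using dim_annih[OF Ys] by simp
  finally show ?thesis .
qed

lemma isotropic_T0:
  fixes Y :: "(complex ^ 'n::finite) set"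
  assumes v: "v \<in> T0 Y a x" and w: "w \<in> T0 Y a x"
  shows "omega v w = 0"
proof -
  define yv where "yv = (\<chi> j. fst v $ j + a $ j * snd v $ j / (snd x $ j)^2)"
  define yw where "yw = (\<chi> j. fst w $ j + a $ j * snd w $ j / (snd x $ j)^2)"
  have Y: "yv \<in> Y" "yw \<in> Y" "snd v \<in> annih Y" "snd w \<in> annih Y"
    using v w by (auto simp: T0_def yv_def yw_def)
  have z1: "(\<Sum>j\<in>UNIV. snd v $ j * yw $ j) = 0" using Y unfolding annih_def by blast
  have z2: "(\<Sum>j\<in>UNIV. snd w $ j * yv $ j) = 0" using Y unfolding annih_def by blast
  have "omega v w = (\<Sum>j\<in>UNIV. snd v $ j * yw $ j - snd w $ j * yv $ j)"
    unfolding omega_def by (rule sum.cong) (auto simp: yv_def yw_def algebra_simps)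
  also have "\<dots> = 0" using z1 z2 by (simp add: sum_subtractf)
  finally show ?thesis .
qed



lemma key_irred:
  fixes Y :: "(complex ^ 'n::finite) set"
  assumes Ys: "vec.subspace Y" and f1: "f1 \<in> polyfun" and f2: "f2 \<in> polyfun"
    and V0: "\<forall>z\<in>L_Ya Y a. f1 z * f2 z = 0"
    and x1: "x1 \<in> L_Ya Y a" and x2: "x2 \<in> L_Ya Y a"
  shows "f1 x1 = 0 \<or> f2 x2 = 0"
proof (rule ccontr)
  assume H: "\<not> (f1 x1 = 0 \<or> f2 x2 = 0)"
  obtain y1 where y10: "x1 = r_map a y1" "y1 \<in> {x. fst x \<in> Y \<and> snd x \<in> annih Y \<and> (\<forall>j. snd x $ j \<noteq> 0)}"
    using x1 unfolding L_Ya_def by (rule imageE)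
  hence y1: "fst y1 \<in> Y" "snd y1 \<in> annih Y" "\<forall>j. snd y1 $ j \<noteq> 0" by auto
  obtain y2 where y20: "x2 = r_map a y2" "y2 \<in> {x. fst x \<in> Y \<and> snd x \<in> annih Y \<and> (\<forall>j. snd x $ j \<noteq> 0)}"
    using x2 unfolding L_Ya_def by (rule imageE)
  hence y2: "fst y2 \<in> Y" "snd y2 \<in> annih Y" "\<forall>j. snd y2 $ j \<noteq> 0" by auto
  define e where "e = snd y2 - snd y1"
  define w where "w = fst y2 - fst y1"
  define P where "P j t = snd y1 $ j + t * e $ j" for j t
  define Q where "Q j t = fst y1 $ j + t * w $ j + a $ j / P j t" for j t
  define S where "S = {t::complex. \<forall>j::'n. snd y1 $ j + t * e $ j \<noteq> 0}"
  define c where "c t = ((\<chi> j. Q j t), (\<chi> j. P j t))" for t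
  have openS: "open S" unfolding S_def by (rule open_nz)
  have finZ: "finite (- S)"
  proof (rule finite_subset)
    show "- S \<subseteq> (\<lambda>j. - snd y1 $ j / e $ j) ` UNIV"
    proof
      fix t assume "t \<in> - S"
      then obtain j where j: "snd y1 $ j + t * e $ j = 0" unfolding S_def by auto
      hence "e $ j \<noteq> 0" using y1(3) by auto
      hence "t = - snd y1 $ j / e $ j" using j by (simp add: field_simps add_eq_0_iff)
      thus "t \<in> (\<lambda>j. - snd y1 $ j / e $ j) ` UNIV" by blast
    qed
  qed simp
  have connS: "connected S"
  proof -
    have "path_connected (- (- S))"
      by (rule path_connected_complement_countable) (use finZ in \<open>auto intro: countable_finite\<close>)
    thus ?thesis by (simp add: path_connected_imp_connected)
  qed
  have S0: "0 \<in> S" and S1: "1 \<in> S" using y1(3) y2(3) by (auto simp: S_def e_def)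
  have cV: "c t \<in> L_Ya Y a" if t: "t \<in> S" for t
  proof -
    have "c t = r_map a (fst y1 + t *s w, snd y1 + t *s e)"
      by (simp add: c_def r_map_def Q_def P_def vec_eq_iff)
    moreover have "fst y1 + t *s w \<in> Y" using Ys y1(1) y2(1)
      by (simp add: w_def vec.subspace_add vec.subspace_scale vec.subspace_diff)
    moreover have "snd y1 + t *s e \<in> annih Y" using subspace_annih[of Y] y1(2) y2(2)
      by (simp add: e_def vec.subspace_add vec.subspace_scale vec.subspace_diff)
    moreover have "\<forall>j. (snd y1 + t *s e) $ j \<noteq> 0" using t by (simp add: S_def)
    ultimately show ?thesis unfolding L_Ya_def by auto
  qed
  have c0: "c 0 = x1" using y10 by (simp add: c_def Q_def P_def r_map_def vec_eq_iff prod_eq_iff)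
  have c1: "c 1 = x2" using y20 by (simp add: c_def Q_def P_def r_map_def vec_eq_iff prod_eq_iff e_def w_def)
  have holo: "(\<lambda>t. f (c t)) holomorphic_on S" if f: "f \<in> polyfun" for f
    unfolding holomorphic_on_def
  proof
    fix t assume t: "t \<in> S"
    have Pt: "P j t \<noteq> 0" for j using t by (simp add: S_def P_def)
    define v where "v = ((\<chi> j. w $ j - a $ j * e $ j / (P j t)^2), (\<chi> j. e $ j))"
    have co: "curve_ok (c t) v Q P t"
      unfolding curve_ok_def
    proof (intro conjI allI)
      fix j
      show "(Q j has_field_derivative fst v $ j) (at t)"
        unfolding Q_def P_def v_def using Pt[of j] unfolding P_def
        by (auto intro!: derivative_eq_intros simp: power2_eq_square field_simps)
      show "(P j has_field_derivative snd v $ j) (at t)"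
        unfolding P_def v_def by (auto intro!: derivative_eq_intros)
      show "Q j t = fst (c t) $ j" by (simp add: c_def)
      show "P j t = snd (c t) $ j" by (simp add: c_def)
    qed
    obtain d where "\<forall>Q P t0. curve_ok (c t) v Q P t0 \<longrightarrow> ((\<lambda>t. f ((\<chi> j. Q j t), (\<chi> j. P j t))) has_field_derivative d) (at t0)"
      using poly_chain[OF f, of "c t" v] by blast
    hence "((\<lambda>t. f (c t)) has_field_derivative d) (at t)" using co unfolding c_def by blast
    thus "(\<lambda>t. f (c t)) field_differentiable at t within S"
      using field_differentiable_at_within field_differentiable_def by blast
  qed
  have h10: "f1 (c 0) \<noteq> 0" and h21: "f2 (c 1) \<noteq> 0" using H c0 c1 by auto
  define U where "U = S \<inter> (\<lambda>t. f1 (c t)) -` (- {0})"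
  have openU: "open U" unfolding U_def
    by (rule continuous_open_preimage[OF holomorphic_on_imp_continuous_on[OF holo[OF f1]] openS]) auto
  have U0: "0 \<in> U" using S0 h10 by (simp add: U_def)
  have "f2 (c 1) = 0"
  proof (rule analytic_continuation[OF holo[OF f2] openS connS _ S0 _ _ S1])
    show "U \<subseteq> S" by (auto simp: U_def)
    show "0 islimpt U" using U0 openU by (simp add: interior_limit_point interior_open)
    fix z assume z: "z \<in> U"
    hence "z \<in> S" "f1 (c z) \<noteq> 0" by (auto simp: U_def)
    thus "f2 (c z) = 0" using V0 cV by fastforce
  qed
  thus False using h21 by simp
qed

lemma irreducible_L:
  fixes Y :: "(complex ^ 'n::finite) set"
  assumes Ys: "vec.subspace Y" and h5: "\<forall>j. \<not> annih Y \<subseteq> {p. p $ j = 0}"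
  shows "irreducible_in_U (L_Ya Y a)"
  unfolding irreducible_in_U_def
proof (intro conjI allI impI)
  show "closed_in_U (L_Ya Y a)" by (rule closed_L[OF Ys])
  obtain p where p: "p \<in> annih Y" "\<forall>j. p $ j \<noteq> 0" using annih_torus[OF h5] by blast
  have "(0, p) \<in> {x. fst x \<in> Y \<and> snd x \<in> annih Y \<and> (\<forall>j. snd x $ j \<noteq> 0)}"
    using p vec.subspace_0[OF Ys] by simp
  hence "r_map a (0, p) \<in> L_Ya Y a" unfolding L_Ya_def by (rule imageI)
  thus "L_Ya Y a \<noteq> {}" by blast
  fix V1 V2 assume A: "closed_in_U V1 \<and> closed_in_U V2 \<and> L_Ya Y a = V1 \<union> V2"
  show "V1 = L_Ya Y a \<or> V2 = L_Ya Y a"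
  proof (rule ccontr)
    assume N: "\<not> (V1 = L_Ya Y a \<or> V2 = L_Ya Y a)"
    have cl1: "closed_in_U V1" and cl2: "closed_in_U V2" using A by simp_all
    obtain S1 where S1: "S1 \<subseteq> polyfun" "V1 = {x \<in> torusU. \<forall>f\<in>S1. f x = 0}"
      using cl1 unfolding closed_in_U_def by (elim exE conjE)
    obtain S2 where S2: "S2 \<subseteq> polyfun" "V2 = {x \<in> torusU. \<forall>f\<in>S2. f x = 0}"
      using cl2 unfolding closed_in_U_def by (elim exE conjE)
    have Vt: "L_Ya Y a \<subseteq> torusU" unfolding L_eq[OF Ys] by auto
    have "V1 \<subseteq> L_Ya Y a" "V2 \<subseteq> L_Ya Y a" using A by blast+
    hence "\<exists>x1\<in>L_Ya Y a. x1 \<notin> V1" "\<exists>x2\<in>L_Ya Y a. x2 \<notin> V2" using N by blast+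
    then obtain x1 x2 where x1: "x1 \<in> L_Ya Y a" "x1 \<notin> V1" and x2: "x2 \<in> L_Ya Y a" "x2 \<notin> V2" by blast
    have "x1 \<in> torusU" "x2 \<in> torusU" using x1 x2 Vt by blast+
    hence "\<exists>f1\<in>S1. f1 x1 \<noteq> 0" "\<exists>f2\<in>S2. f2 x2 \<noteq> 0" using x1(2) x2(2) S1(2) S2(2) by blast+
    then obtain f1 f2 where f1: "f1 \<in> S1" "f1 x1 \<noteq> 0" and f2: "f2 \<in> S2" "f2 x2 \<noteq> 0" by blast
    have p1: "f1 \<in> polyfun" "f2 \<in> polyfun" using f1 f2 S1(1) S2(1) by blast+
    have "\<forall>z\<in>L_Ya Y a. f1 z * f2 z = 0"
    proof
      fix z assume "z \<in> L_Ya Y a"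
      hence "z \<in> V1 \<or> z \<in> V2" using A by blast
      moreover have "z \<in> V1 \<Longrightarrow> f1 z = 0" using f1(1) S1(2) by blast
      moreover have "z \<in> V2 \<Longrightarrow> f2 z = 0" using f2(1) S2(2) by blast
      ultimately show "f1 z * f2 z = 0" by auto
    qed
    hence "f1 x1 = 0 \<or> f2 x2 = 0" by (rule key_irred[OF Ys p1 _ x1(1) x2(1)])
    thus False using f1(2) f2(2) by blast
  qed
qed


theorem lemma4p1:
  fixes Y :: "(complex ^ 'n::finite) set" and a :: "complex ^ 'n" and k :: nat
  assumes "vec.subspace Y" and "vec.dim Y = k"
    and "\<forall>j. a $ j \<noteq> 0"
    and "\<forall>j. \<not> Y \<subseteq> {q. q $ j = 0}"
    and "\<forall>j. \<not> annih Y \<subseteq> {p. p $ j = 0}"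
  shows "smooth_lagrangian_subvariety (L_Ya Y a)
    \<and> L_Ya Y a = {x \<in> torusU. (\<forall>\<alpha>\<in>Y. F_fun \<alpha> x = 0) \<and> (\<forall>\<beta>\<in>annih Y. G_fun a \<beta> x = 0)}
    \<and> in_involution ({F_fun \<alpha> | \<alpha>. \<alpha> \<in> Y} \<union> {G_fun a \<beta> | \<beta>. \<beta> \<in> annih Y}) torusU"
proof (intro conjI)
  note Ys = assms(1)
  show "L_Ya Y a = {x \<in> torusU. (\<forall>\<alpha>\<in>Y. F_fun \<alpha> x = 0) \<and> (\<forall>\<beta>\<in>annih Y. G_fun a \<beta> x = 0)}"
    by (rule L_eq[OF Ys])
  show "in_involution ({F_fun \<alpha> | \<alpha>. \<alpha> \<in> Y} \<union> {G_fun a \<beta> | \<beta>. \<beta> \<in> annih Y}) torusU"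
    by (rule involution)
  show "smooth_lagrangian_subvariety (L_Ya Y a)"
    unfolding smooth_lagrangian_subvariety_def
  proof (intro conjI ballI)
    show "irreducible_in_U (L_Ya Y a)" by (rule irreducible_L[OF Ys assms(5)])
    have T: "tangent_space (L_Ya Y a) x = T0 Y a x" if x: "x \<in> L_Ya Y a" for x
      using tangent_sub[OF Ys x] T0_sub_tangent[OF Ys x] by blast
    {
      fix x assume x: "x \<in> L_Ya Y a"
      have "x \<in> torusU" using x unfolding L_eq[OF Ys] by blast
      hence nz: "\<forall>j. snd x $ j \<noteq> 0" by (simp add: torusU_def)
      show "pdim (tangent_space (L_Ya Y a) x) = CARD('n)" unfolding T[OF x] by (rule dim_T0[OF Ys nz])
    }
    fix x v w assume x: "x \<in> L_Ya Y a" and v: "v \<in> tangent_space (L_Ya Y a) x"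
      and w: "w \<in> tangent_space (L_Ya Y a) x"
    show "omega v w = 0" using v w unfolding T[OF x] by (rule isotropic_T0)
  qed
qed

end
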